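(* Fix $h\in\{2,\dots,H\}$. If $x_1,x_2\in\mathcal{X}_{h-1}$ are kinematically inseparable, then $f^\star(x_1,a,x')=f^\star(x_2,a,x')$ for all $x'\in\mathcal{X}_h$ and $a\in\mathcal{A}$. Analogously, if $x_1',x_2'\in\mathcal{X}_h$ are kinematically inseparable, then $f^\star(x,a,x_1')=f^\star(x,a,x_2')$ for all $x\in\mathcal{X}_{h-1}$ and $a\in\mathcal{A}$.
   Context: Block MDP: horizon $H$; finite latent states $\mathcal{S}=\sqcup_h\mathcal{S}_h$; countable observations $\mathcal{X}=\sqcup_h\mathcal{X}_h$; finite actions $\mathcal{A}$; start distribution $\mu$; transitions $T(\cdot\mid s,a)\in\Delta(\mathcal{S}_{h+1})$; emissions $q(\cdot\mid s)\in\Delta(\mathcal{X}_h)$ with disjoint supports, decoder $g^\star$; observation transitions $T(x'\mid x,a)=q(x'\mid g^\star(x'))T(g^\star(x')\mid g^\star(x),a)$. $\Psi_{h-1}$ is a finite set of policies forming an $\alpha$-policy cover of $\mathcal{S}_{h-1}$. $\rho_h\in\Delta(\mathcal{X}_h)$ is the law of $x_h$ when a policy chosen uniformly from $\Psi_{h-1}$ is followed to $x_{h-1}$ and then a uniformly random action is taken; $f^\star(x,a,x')=\frac{T(x'\mid x,a)}{T(x'\mid x,a)+\rho_h(x')}$ (equivalently $\frac{T(g^\star(x')\mid g^\star(x),a)}{T(g^\star(x')\mid g^\star(x),a)+\rho_h(g^\star(x'))}$), the Bayes optimal predictor for distinguishing real from imposter transitions. KI: for full-support $u\in\Delta(\mathcal{X}\times\mathcal{A})$,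 $\mathbb{P}_u(x,a\mid x')=\frac{T(x'\mid x,a)u(x,a)}{\sum_{\tilde x,\tilde a}T(x'\mid\tilde x,\tilde a)u(\tilde x,\tilde a)}$; $x_1',x_2'$ are backward KI if $\mathbb{P}_u(\cdot\mid x_1')=\mathbb{P}_u(\cdot\mid x_2')$ for every such $u$; $x_1,x_2$ are forward KI if $T(\cdot\mid x_1,a)=T(\cdot\mid x_2,a)$ for all $a$; kinematically inseparable means both. *)

theory Defs
  imports "HOL-Probability.Probability"
begin

text \<open>The layer of an observation x is lvl (g x), where g is the decoder.\<close>

definition block_mdp ::
  "nat \<Rightarrow> ('s::finite \<Rightarrow> nat) \<Rightarrow> 's pmf \<Rightarrow> ('s \<Rightarrow> 'a::finite \<Rightarrow> 's pmf)
   \<Rightarrow> ('s \<Rightarrow> 'x::countable pmf) \<Rightarrow> ('x \<Rightarrow> 's) \<Rightarrow> bool" where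
  "block_mdp H lvl \<mu> T q g \<longleftrightarrow>
     (\<forall>s. lvl s \<in> {1..H}) \<and>
     set_pmf \<mu> \<subseteq> {s. lvl s = 1} \<and>
     (\<forall>s a. lvl s < H \<longrightarrow> set_pmf (T s a) \<subseteq> {s'. lvl s' = Suc (lvl s)}) \<and>
     (\<forall>s x. x \<in> set_pmf (q s) \<longrightarrow> g x = s) \<and>
     (\<forall>x. x \<in> set_pmf (q (g x)))"

definition obs_T :: "('s \<Rightarrow> 'a \<Rightarrow> 's pmf) \<Rightarrow> ('s \<Rightarrow> 'x pmf) \<Rightarrow> ('x \<Rightarrow> 's)
    \<Rightarrow> 'x \<Rightarrow> 'a \<Rightarrow> 'x \<Rightarrow> real" where
  "obs_T T q g x a x' = pmf (q (g x')) x' * pmf (T (g x) a) (g x')"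

text \<open>Law of the observation x_h when following the (Markov, possibly stochastic)
 policy pi : X -> Delta(A) from the start.\<close>
definition roll :: "'s pmf \<Rightarrow> ('s \<Rightarrow> 'a \<Rightarrow> 's pmf) \<Rightarrow> ('s \<Rightarrow> 'x pmf) \<Rightarrow> ('x \<Rightarrow> 's)
    \<Rightarrow> ('x \<Rightarrow> 'a pmf) \<Rightarrow> nat \<Rightarrow> 'x pmf" where
  "roll \<mu> T q g \<pi> h =
     ((\<lambda>D. bind_pmf D (\<lambda>x. bind_pmf (\<pi> x) (\<lambda>a. bind_pmf (T (g x) a) q))) ^^ (h - 1))
       (bind_pmf \<mu> q)"

definition reach :: "'s pmf \<Rightarrow> ('s \<Rightarrow> 'a \<Rightarrow> 's pmf) \<Rightarrow> ('s \<Rightarrow> 'x pmf) \<Rightarrow> ('x \<Rightarrow> 's)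
    \<Rightarrow> ('x \<Rightarrow> 'a pmf) \<Rightarrow> nat \<Rightarrow> 's \<Rightarrow> real" where
  "reach \<mu> T q g \<pi> h s = measure_pmf.prob (roll \<mu> T q g \<pi> h) {x. g x = s}"

definition policy_cover :: "('s \<Rightarrow> nat) \<Rightarrow> 's pmf \<Rightarrow> ('s \<Rightarrow> 'a \<Rightarrow> 's pmf) \<Rightarrow> ('s \<Rightarrow> 'x pmf)
    \<Rightarrow> ('x \<Rightarrow> 's) \<Rightarrow> ('x \<Rightarrow> 'a pmf) set \<Rightarrow> real \<Rightarrow> nat \<Rightarrow> bool" where
  "policy_cover lvl \<mu> T q g \<Psi> \<alpha> h \<longleftrightarrow>
     (\<forall>s. lvl s = h \<longrightarrow>
        (\<exists>\<pi>\<in>\<Psi>. reach \<mu> T q g \<pi> h s \<ge> \<alpha> * (SUP \<pi>'. reach \<mu> T q g \<pi>' h s)))"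

definition rho :: "'s pmf \<Rightarrow> ('s \<Rightarrow> 'a::finite \<Rightarrow> 's pmf) \<Rightarrow> ('s \<Rightarrow> 'x pmf) \<Rightarrow> ('x \<Rightarrow> 's)
    \<Rightarrow> ('x \<Rightarrow> 'a pmf) set \<Rightarrow> nat \<Rightarrow> 'x pmf" where
  "rho \<mu> T q g \<Psi> h =
     bind_pmf (pmf_of_set \<Psi>) (\<lambda>\<pi>. bind_pmf (roll \<mu> T q g \<pi> (h - 1)) (\<lambda>x.
       bind_pmf (pmf_of_set UNIV) (\<lambda>a. bind_pmf (T (g x) a) q)))"

definition f_star :: "'s pmf \<Rightarrow> ('s \<Rightarrow> 'a::finite \<Rightarrow> 's pmf) \<Rightarrow> ('s \<Rightarrow> 'x pmf) \<Rightarrow> ('x \<Rightarrow> 's)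
    \<Rightarrow> ('x \<Rightarrow> 'a pmf) set \<Rightarrow> nat \<Rightarrow> 'x \<Rightarrow> 'a \<Rightarrow> 'x \<Rightarrow> real" where
  "f_star \<mu> T q g \<Psi> h x a x' =
     obs_T T q g x a x' / (obs_T T q g x a x' + pmf (rho \<mu> T q g \<Psi> h) x')"

definition cond_back :: "('s \<Rightarrow> 'a \<Rightarrow> 's pmf) \<Rightarrow> ('s \<Rightarrow> 'x pmf) \<Rightarrow> ('x \<Rightarrow> 's)
    \<Rightarrow> ('x \<times> 'a) pmf \<Rightarrow> 'x \<Rightarrow> 'x \<times> 'a \<Rightarrow> real" where
  "cond_back T q g u x' = (\<lambda>(x, a). obs_T T q g x a x' * pmf u (x, a) /
      measure_pmf.expectation u (\<lambda>(y, b). obs_T T q g y b x'))"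

definition backward_KI :: "('s \<Rightarrow> 'a \<Rightarrow> 's pmf) \<Rightarrow> ('s \<Rightarrow> 'x pmf) \<Rightarrow> ('x \<Rightarrow> 's)
    \<Rightarrow> 'x \<Rightarrow> 'x \<Rightarrow> bool" where
  "backward_KI T q g x1' x2' \<longleftrightarrow>
     (\<forall>u :: ('x \<times> 'a) pmf. set_pmf u = UNIV \<longrightarrow> cond_back T q g u x1' = cond_back T q g u x2')"

definition forward_KI :: "('s \<Rightarrow> 'a \<Rightarrow> 's pmf) \<Rightarrow> ('s \<Rightarrow> 'x pmf) \<Rightarrow> ('x \<Rightarrow> 's)
    \<Rightarrow> 'x \<Rightarrow> 'x \<Rightarrow> bool" where
  "forward_KI T q g x1 x2 \<longleftrightarrow> (\<forall>a x'. obs_T T q g x1 a x' = obs_T T q g x2 a x')"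

definition kin_insep :: "('s \<Rightarrow> 'a \<Rightarrow> 's pmf) \<Rightarrow> ('s \<Rightarrow> 'x pmf) \<Rightarrow> ('x \<Rightarrow> 's)
    \<Rightarrow> 'x \<Rightarrow> 'x \<Rightarrow> bool" where
  "kin_insep T q g x1 x2 \<longleftrightarrow> backward_KI T q g x1 x2 \<and> forward_KI T q g x1 x2"

end

theory Submission
  imports Defs
begin

lemma full_pmf_exists: "\<exists>u :: ('b::countable) pmf. set_pmf u = UNIV"
proof -
  have "set_pmf (map_pmf from_nat (geometric_pmf (1/2))) = (UNIV :: 'b set)"
    by (simp add: set_pmf_geometric)
  then show ?thesis by blast
qed

lemma pmf_step:
  assumes bm: "block_mdp H lvl \<mu> T q g"
  shows "pmf (bind_pmf (T s a) q) x' = pmf (q (g x')) x' * pmf (T s a) (g x')"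
proof -
  have sup: "\<And>s' x. x \<in> set_pmf (q s') \<Longrightarrow> g x = s'" using bm unfolding block_mdp_def by blast
  have "pmf (bind_pmf (T s a) q) x' = (LINT s'|measure_pmf (T s a). pmf (q s') x')"
    by (simp add: pmf_bind)
  also have "\<dots> = (\<Sum>s'\<in>{g x'}. pmf (T s a) s' *\<^sub>R pmf (q s') x')"
    apply (rule integral_measure_pmf)
    using sup by (auto simp: set_pmf_eq)
  finally show ?thesis by simp
qed

lemma pmf_K:
  assumes bm: "block_mdp H lvl \<mu> T q g"
  shows "pmf (bind_pmf (pmf_of_set UNIV) (\<lambda>a. bind_pmf (T (g x) a) q)) x'
     = (LINT a|measure_pmf (pmf_of_set UNIV). obs_T T q g x a x')"
proof -
  have "pmf (bind_pmf (pmf_of_set UNIV) (\<lambda>a. bind_pmf (T (g x) a) q)) x'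
     = (LINT a|measure_pmf (pmf_of_set UNIV). pmf (bind_pmf (T (g x) a) q) x')"
    by (rule pmf_bind)
  also have "\<dots> = (LINT a|measure_pmf (pmf_of_set UNIV). obs_T T q g x a x')"
    by (simp only: pmf_step[OF bm] obs_T_def)
  finally show ?thesis .
qed

lemma rho_scale:
  assumes bm: "block_mdp H lvl \<mu> T q g"
    and sc: "\<And>y b. obs_T T q g y b x1 = c * obs_T T q g y b x2"
  shows "pmf (rho \<mu> T q g \<Psi> h) x1 = c * pmf (rho \<mu> T q g \<Psi> h) x2"
proof -
  define K where "K = (\<lambda>x. bind_pmf (pmf_of_set UNIV) (\<lambda>a. bind_pmf (T (g x) a) q))"
  have k: "pmf (K x) x1 = c * pmf (K x) x2" for x
    unfolding K_def pmf_K[OF bm] sc by (rule integral_mult_right_zero)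
  have b: "pmf (bind_pmf M K) x1 = c * pmf (bind_pmf M K) x2" for M
    unfolding pmf_bind k by (rule integral_mult_right_zero)
  have "pmf (bind_pmf (pmf_of_set \<Psi>) (\<lambda>\<pi>. bind_pmf (roll \<mu> T q g \<pi> (h - 1)) K)) x1
     = c * pmf (bind_pmf (pmf_of_set \<Psi>) (\<lambda>\<pi>. bind_pmf (roll \<mu> T q g \<pi> (h - 1)) K)) x2"
    unfolding pmf_bind[of "pmf_of_set \<Psi>"] b by (rule integral_mult_right_zero)
  then show ?thesis unfolding rho_def K_def .
qed

theorem mainTheorem11:
  fixes H h :: nat
    and lvl :: "'s::finite \<Rightarrow> nat"
    and \<mu> :: "'s pmf"
    and T :: "'s \<Rightarrow> 'a::finite \<Rightarrow> 's pmf"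
    and q :: "'s \<Rightarrow> 'x::countable pmf"
    and g :: "'x \<Rightarrow> 's"
    and \<Psi> :: "('x \<Rightarrow> 'a pmf) set"
    and \<alpha> :: real
  assumes "block_mdp H lvl \<mu> T q g"
    and "h \<in> {2..H}"
    and "finite \<Psi>" and "\<Psi> \<noteq> {}"
    and "0 < \<alpha>" and "\<alpha> \<le> 1"
    and "policy_cover lvl \<mu> T q g \<Psi> \<alpha> (h - 1)"
  shows "(\<forall>x1 x2. lvl (g x1) = h - 1 \<longrightarrow> lvl (g x2) = h - 1 \<longrightarrow> kin_insep T q g x1 x2 \<longrightarrow>
            (\<forall>x' a. lvl (g x') = h \<longrightarrow>
               f_star \<mu> T q g \<Psi> h x1 a x' = f_star \<mu> T q g \<Psi> h x2 a x'))
       \<and> (\<forall>x1' x2'. lvl (g x1') = h \<longrightarrow> lvl (g x2') = h \<longrightarrow> kin_insep T q g x1' x2' \<longrightarrow>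
            (\<forall>x a. lvl (g x) = h - 1 \<longrightarrow>
               f_star \<mu> T q g \<Psi> h x a x1' = f_star \<mu> T q g \<Psi> h x a x2'))"
proof (intro conjI allI impI)
  fix x1 x2 :: 'x and x' :: 'x and a :: 'a
  assume "kin_insep T q g x1 x2"
  then show "f_star \<mu> T q g \<Psi> h x1 a x' = f_star \<mu> T q g \<Psi> h x2 a x'"
    unfolding kin_insep_def forward_KI_def f_star_def by simp
next
  fix x1' x2' :: 'x and x :: 'x and a :: 'a
  assume "kin_insep T q g x1' x2'"
  then have bk: "backward_KI T q g x1' x2'" unfolding kin_insep_def by simp
  obtain u :: "('x \<times> 'a) pmf" where u: "set_pmf u = UNIV" using full_pmf_exists by blast
  define o1 where "o1 = (\<lambda>(y, b). obs_T T q g y b x1')"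
  define o2 where "o2 = (\<lambda>(y, b). obs_T T q g y b x2')"
  define E1 where "E1 = measure_pmf.expectation u o1"
  define E2 where "E2 = measure_pmf.expectation u o2"
  have onn: "0 \<le> obs_T T q g y b z" for y b z by (simp add: obs_T_def)
  have ole: "obs_T T q g y b z \<le> 1" for y b z
    unfolding obs_T_def by (simp add: mult_le_one pmf_le_1)
  have int: "integrable (measure_pmf u) (\<lambda>(y, b). obs_T T q g y b z)" for z
    by (rule measure_pmf.integrable_const_bound[where B=1]) (auto simp: onn ole)
  have zero: "E = 0 \<Longrightarrow> E = measure_pmf.expectation u (\<lambda>(y, b). obs_T T q g y b z)
       \<Longrightarrow> obs_T T q g y b z = 0" for E z y b
  proof -
    assume "E = 0" "E = measure_pmf.expectation u (\<lambda>(y, b). obs_T T q g y b z)"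
    then have "AE p in measure_pmf u. (\<lambda>(y, b). obs_T T q g y b z) p = 0"
      using integral_nonneg_eq_0_iff_AE[OF int] onn by (auto split: prod.splits)
    then show ?thesis using u by (simp add: AE_measure_pmf_iff)
  qed
  have E1nn: "E1 \<ge> 0" unfolding E1_def o1_def by (rule integral_nonneg_AE) (auto simp: onn)
  have E2nn: "E2 \<ge> 0" unfolding E2_def o2_def by (rule integral_nonneg_AE) (auto simp: onn)
  have eq: "obs_T T q g y b x1' / E1 = obs_T T q g y b x2' / E2" for y b
  proof -
    have "cond_back T q g u x1' (y, b) = cond_back T q g u x2' (y, b)"
      using bk u unfolding backward_KI_def by simp
    moreover have "pmf u (y, b) > 0" using u by (simp add: pmf_positive)
    ultimately show ?thesis
      unfolding cond_back_def E1_def E2_def o1_def o2_def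
      by (simp add: divide_simps split: if_splits)
  qed
  have "\<exists>c>0. \<forall>y b. obs_T T q g y b x1' = c * obs_T T q g y b x2'"
  proof (cases "E1 = 0")
    case True
    then have z1: "obs_T T q g y b x1' = 0" for y b
      using zero[of E1 x1'] unfolding E1_def o1_def by simp
    have z2: "obs_T T q g y b x2' = 0" for y b
    proof (cases "E2 = 0")
      case True then show ?thesis using zero[of E2 x2'] unfolding E2_def o2_def by simp
    next
      case False then show ?thesis using eq[of y b] z1 by simp
    qed
    show ?thesis using z1 z2 by (intro exI[of _ 1]) simp
  next
    case False
    show ?thesis
    proof (cases "E2 = 0")
      case True
      then have z2: "obs_T T q g y b x2' = 0" for y b
        using zero[of E2 x2'] unfolding E2_def o2_def by simp
      have z1: "obs_T T q g y b x1' = 0" for y b using eq[of y b] z2 False by simp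
      show ?thesis using z1 z2 by (intro exI[of _ 1]) simp
    next
      case F2: False
      have "obs_T T q g y b x1' = (E1 / E2) * obs_T T q g y b x2'" for y b
        using eq[of y b] False F2 by (simp add: field_simps)
      moreover have "E1 / E2 > 0" using False F2 E1nn E2nn by simp
      ultimately show ?thesis by blast
    qed
  qed
  then obtain c where c: "c > 0" "\<And>y b. obs_T T q g y b x1' = c * obs_T T q g y b x2'" by blast
  have r: "pmf (rho \<mu> T q g \<Psi> h) x1' = c * pmf (rho \<mu> T q g \<Psi> h) x2'"
    by (rule rho_scale[OF assms(1) c(2)])
  show "f_star \<mu> T q g \<Psi> h x a x1' = f_star \<mu> T q g \<Psi> h x a x2'"
    unfolding f_star_def r c(2)[of x a]
    using c(1) by (simp add: distrib_left[symmetric])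
qed

end
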